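(* Let $\varepsilon>0$ and $c>0$ be constants, and let $\ell=\ell(n)$ be integers with $0\le \ell\le C_0 n^{1/2-\varepsilon}$ for some constant $C_0$. Then there is a constant $m$ (depending only on $\varepsilon,c$) such that, for all sufficiently large $n$, there is a randomized procedure $s$ with the following properties: on input $x\in\{0,1\}^n$ it queries $\mathrm{Jump}_\ell$ at $x$ and at at most $m$ further points, each sampled independently from a unary unbiased distribution applied to $x$; its output $s(x)$ depends only on the observed fitness values (and $n,\ell$); and for every $x\in\{0,1\}^n$, $\Pr[s(x)=|x|_1]\ge 1-O(n^{-c})$.
   Context: For $x\in\{0,1\}^n$ let $|x|_1=\sum_i x_i$. For an integer $0\le\ell<n/2$, $\mathrm{Jump}_\ell:\{0,1\}^n\to\mathbb{R}$ is defined by $\mathrm{Jump}_\ell(x)=n$ if $|x|_1=n$, $\mathrm{Jump}_\ell(x)=|x|_1$ if $\ell<|x|_1<n-\ell$, and $\mathrm{Jump}_\ell(x)=0$ otherwise. A unary unbiased distribution is a family $(D(\cdot\mid y))_{y\in\{0,1\}^n}$ of probability distributions on $\{0,1\}^n$ with $D(x\mid y)=D(x\oplus z\mid y\oplus z)$ for all $x,y,z$ ($\oplus$ = bitwise XOR) and $D(x\mid y)=D(\sigma(x)\mid\sigma(y))$ for all permutations $\sigma$ of $[n]$, where $\sigma(x)=x_{\sigma(1)}\cdots x_{\sigma(n)}$. *)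

theory Defs
  imports "HOL-Probability.Probability" "HOL-Combinatorics.Permutations"
begin

definition cube :: "nat \<Rightarrow> bool list set" where
  "cube n = {x. length x = n}"

definition weight :: "bool list \<Rightarrow> nat" where
  "weight x = length (filter id x)"

definition jump :: "nat \<Rightarrow> nat \<Rightarrow> bool list \<Rightarrow> real" where
  "jump n l x = (if weight x = n then real n
                 else if l < weight x \<and> weight x < n - l then real (weight x) else 0)"

definition xorl :: "bool list \<Rightarrow> bool list \<Rightarrow> bool list" where
  "xorl x z = map2 (\<noteq>) x z"

text \<open>sigma(x) = x_sigma(1) ... x_sigma(n) (0-indexed here).\<close>
definition perm_bits :: "(nat \<Rightarrow> nat) \<Rightarrow> bool list \<Rightarrow> bool list" where
  "perm_bits \<sigma> x = map (\<lambda>i. x ! \<sigma> i) [0..<length x]"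

text \<open>A unary unbiased distribution on {0,1}^n: D y is the distribution D(. | y).\<close>
definition unary_unbiased :: "nat \<Rightarrow> (bool list \<Rightarrow> bool list pmf) \<Rightarrow> bool" where
  "unary_unbiased n D \<longleftrightarrow>
     (\<forall>y\<in>cube n. set_pmf (D y) \<subseteq> cube n) \<and>
     (\<forall>x\<in>cube n. \<forall>y\<in>cube n. \<forall>z\<in>cube n.
         pmf (D y) x = pmf (D (xorl y z)) (xorl x z)) \<and>
     (\<forall>\<sigma>. \<sigma> permutes {..<n} \<longrightarrow> (\<forall>x\<in>cube n. \<forall>y\<in>cube n.
         pmf (D y) x = pmf (D (perm_bits \<sigma> y)) (perm_bits \<sigma> x)))"

fun samples :: "(nat \<Rightarrow> 'a pmf) \<Rightarrow> nat \<Rightarrow> 'a list pmf" where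
  "samples P 0 = return_pmf []"
| "samples P (Suc k) =
     bind_pmf (samples P k) (\<lambda>ys. bind_pmf (P k) (\<lambda>y. return_pmf (ys @ [y])))"

definition run :: "nat \<Rightarrow> nat \<Rightarrow> nat \<Rightarrow> (nat \<Rightarrow> bool list \<Rightarrow> bool list pmf)
                    \<Rightarrow> (real list \<Rightarrow> nat) \<Rightarrow> bool list \<Rightarrow> nat pmf" where
  "run n l m D g x =
     map_pmf (\<lambda>ys. g (jump n l x # map (jump n l) ys)) (samples (\<lambda>i. D i x) m)"

end

theory Submission
  imports Defs
begin


lemma samples_pair:
  "samples P (Suc k) = map_pmf (\<lambda>(ys,y). ys @ [y]) (pair_pmf (samples P k) (P k))"
  by (simp add: pair_pmf_def map_bind_pmf map_return_pmf bind_assoc_pmf bind_return_pmf)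

lemma samples_set:
  "ys \<in> set_pmf (samples (\<lambda>_. Q) m) \<Longrightarrow> length ys = m \<and> set ys \<subseteq> set_pmf Q"
proof (induction m arbitrary: ys)
  case 0 then show ?case by simp
next
  case (Suc m) then show ?case by (fastforce simp: set_bind_pmf)
qed

lemma samples_allbad:
  fixes Q :: "'a::countable pmf"
  assumes "measure_pmf.prob Q {y. B y} \<le> p"
  shows "measure_pmf.prob (samples (\<lambda>_. Q) m) {ys. \<forall>y\<in>set ys. B y} \<le> p ^ m"
proof (induction m)
  case 0 then show ?case by simp
next
  case (Suc m)
  have p0: "0 \<le> p" using assms measure_nonneg order_trans by blast
  have "(\<lambda>(ys,y). ys @ [y]) -` {ys. \<forall>y\<in>set ys. B y} = {ys. \<forall>y\<in>set ys. B y} \<times> {y. B y}"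
    by auto
  then have "measure_pmf.prob (samples (\<lambda>_. Q) (Suc m)) {ys. \<forall>y\<in>set ys. B y}
      = measure_pmf.prob (samples (\<lambda>_. Q) m) {ys. \<forall>y\<in>set ys. B y} * measure_pmf.prob Q {y. B y}"
    by (simp only: samples_pair measure_map_pmf) (rule measure_pmf_prob_product; simp add: countableI_type)
  also have "\<dots> \<le> p ^ m * p"
    by (rule mult_mono[OF Suc assms]) (auto simp: p0)
  finally show ?case by (simp add: mult.commute)
qed



definition flip :: "nat set \<Rightarrow> bool list \<Rightarrow> bool list" where
  "flip S y = map (\<lambda>i. y!i \<noteq> (i \<in> S)) [0..<length y]"

definition ksets :: "nat \<Rightarrow> nat \<Rightarrow> nat set set" where
  "ksets n k = {S. S \<subseteq> {..<n} \<and> card S = k}"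

definition Dk :: "nat \<Rightarrow> nat \<Rightarrow> bool list \<Rightarrow> bool list pmf" where
  "Dk n k y = map_pmf (\<lambda>S. flip S y) (pmf_of_set (ksets n k))"

definition dif :: "nat \<Rightarrow> bool list \<Rightarrow> bool list \<Rightarrow> nat set" where
  "dif n y x = {i. i < n \<and> y!i \<noteq> x!i}"

lemma ksets_finite: "finite (ksets n k)"
  unfolding ksets_def by (rule finite_subset[of _ "Pow {..<n}"]) auto

lemma ksets_ne: "k \<le> n \<Longrightarrow> ksets n k \<noteq> {}"
  unfolding ksets_def by (metis (mono_tags, lifting) card_lessThan empty_iff lessThan_subset_iff mem_Collect_eq)

lemma length_flip[simp]: "length (flip S y) = length y"
  by (simp add: flip_def)

lemma nth_flip[simp]: "i < length y \<Longrightarrow> flip S y ! i = (y!i \<noteq> (i \<in> S))"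
  by (simp add: flip_def)

lemma flip_eq_iff:
  assumes "S \<subseteq> {..<n}" "length y = n" "length x = n"
  shows "flip S y = x \<longleftrightarrow> S = dif n y x"
proof
  assume "flip S y = x"
  show "S = dif n y x"
  proof (intro set_eqI iffI)
    fix i assume "i \<in> S"
    then have "i < n" using assms by auto
    then show "i \<in> dif n y x" using \<open>flip S y = x\<close>[symmetric] \<open>i \<in> S\<close> assms by (auto simp: dif_def)
  next
    fix i assume "i \<in> dif n y x"
    then show "i \<in> S" using \<open>flip S y = x\<close>[symmetric] assms by (auto simp: dif_def)
  qed
next
  assume "S = dif n y x"
  then show "flip S y = x" using assms
    by (intro nth_equalityI) (auto simp: dif_def)
qed

lemma pmf_Dk:
  assumes "k \<le> n" "length y = n" "length x = n"
  shows "pmf (Dk n k y) x = (if card (dif n y x) = k then 1 / card (ksets n k) else 0)"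
proof -
  have dsub: "dif n y x \<subseteq> {..<n}" by (auto simp: dif_def)
  have "ksets n k \<inter> (\<lambda>S. flip S y) -` {x} = (if card (dif n y x) = k then {dif n y x} else {})"
  proof (cases "card (dif n y x) = k")
    case True
    then show ?thesis using flip_eq_iff[OF _ assms(2,3)] dsub by (auto simp: ksets_def)
  next
    case False
    have "S \<notin> ksets n k" if "flip S y = x" for S
      using that False flip_eq_iff[of S n y x] assms by (auto simp: ksets_def)
    then show ?thesis using False by auto
  qed
  then show ?thesis
    unfolding Dk_def pmf_map using ksets_finite ksets_ne[OF assms(1)]
    by (simp add: measure_pmf_of_set)
qed

lemma dif_xor:
  assumes "length x = n" "length y = n" "length z = n"
  shows "dif n (xorl y z) (xorl x z) = dif n y x"
  using assms by (auto simp: dif_def xorl_def)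

lemma dif_perm:
  assumes "\<sigma> permutes {..<n}" "length x = n" "length y = n"
  shows "card (dif n (perm_bits \<sigma> y) (perm_bits \<sigma> x)) = card (dif n y x)"
proof -
  have e: "dif n (perm_bits \<sigma> y) (perm_bits \<sigma> x) = {i. i < n \<and> y ! \<sigma> i \<noteq> x ! \<sigma> i}"
    using assms by (auto simp: dif_def perm_bits_def)
  have "bij_betw \<sigma> {i. i < n \<and> y ! \<sigma> i \<noteq> x ! \<sigma> i} (dif n y x)"
  proof -
    have b: "bij_betw \<sigma> {..<n} {..<n}" using assms(1) by (rule permutes_imp_bij)
    have "\<sigma> ` {i. i < n \<and> y ! \<sigma> i \<noteq> x ! \<sigma> i} = dif n y x"
    proof
      show "\<sigma> ` {i. i < n \<and> y ! \<sigma> i \<noteq> x ! \<sigma> i} \<subseteq> dif n y x"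
        using b by (auto simp: dif_def bij_betw_def)
      show "dif n y x \<subseteq> \<sigma> ` {i. i < n \<and> y ! \<sigma> i \<noteq> x ! \<sigma> i}"
      proof
        fix j assume j: "j \<in> dif n y x"
        then have "j \<in> \<sigma> ` {..<n}" using b by (auto simp: dif_def bij_betw_def)
        then obtain i where "i < n" "j = \<sigma> i" by auto
        then show "j \<in> \<sigma> ` {i. i < n \<and> y ! \<sigma> i \<noteq> x ! \<sigma> i}" using j by (auto simp: dif_def)
      qed
    qed
    moreover have "inj_on \<sigma> {i. i < n \<and> y ! \<sigma> i \<noteq> x ! \<sigma> i}"
      using b by (rule inj_on_subset[OF bij_betw_imp_inj_on]) auto
    ultimately show ?thesis by (simp add: bij_betw_def)
  qed
  then show ?thesis using e bij_betw_same_card by metis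
qed

lemma Dk_unbiased:
  assumes "k \<le> n"
  shows "unary_unbiased n (Dk n k)"
  unfolding unary_unbiased_def
proof (intro conjI ballI allI impI)
  fix y assume "y \<in> cube n"
  then show "set_pmf (Dk n k y) \<subseteq> cube n" by (auto simp: Dk_def cube_def)
next
  fix x y z assume "x \<in> cube n" "y \<in> cube n" "z \<in> cube n"
  moreover have "length (xorl y z) = n" "length (xorl x z) = n"
    using \<open>x \<in> cube n\<close> \<open>y \<in> cube n\<close> \<open>z \<in> cube n\<close> by (auto simp: xorl_def cube_def)
  ultimately show "pmf (Dk n k y) x = pmf (Dk n k (xorl y z)) (xorl x z)"
    using assms by (simp add: cube_def pmf_Dk dif_xor)
next
  fix \<sigma> x y assume "\<sigma> permutes {..<n}" "x \<in> cube n" "y \<in> cube n"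
  moreover have "length (perm_bits \<sigma> y) = n" "length (perm_bits \<sigma> x) = n"
    using \<open>x \<in> cube n\<close> \<open>y \<in> cube n\<close> by (auto simp: perm_bits_def cube_def)
  ultimately show "pmf (Dk n k y) x = pmf (Dk n k (perm_bits \<sigma> y)) (perm_bits \<sigma> x)"
    using assms by (simp add: cube_def pmf_Dk dif_perm)
qed



lemma card_ksets: "card (ksets n k) = n choose k"
  unfolding ksets_def using n_subsets[of "{..<n}" k] by simp

lemma card_ksets_i:
  assumes "i < n" "1 \<le> k"
  shows "card {S \<in> ksets n k. i \<in> S} = (n - 1) choose (k - 1)"
proof -
  let ?T = "{T. T \<subseteq> {..<n} - {i} \<and> card T = k - 1}"
  have fin: "\<And>T. T \<subseteq> {..<n} - {i} \<Longrightarrow> finite T" by (meson finite_Diff finite_lessThan finite_subset)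
  have "bij_betw (insert i) ?T {S \<in> ksets n k. i \<in> S}"
  proof (rule bij_betw_byWitness[where f' = "\<lambda>S. S - {i}"])
    show "\<forall>a\<in>?T. insert i a - {i} = a" by auto
    show "\<forall>a'\<in>{S \<in> ksets n k. i \<in> S}. insert i (a' - {i}) = a'" by auto
    show "insert i ` ?T \<subseteq> {S \<in> ksets n k. i \<in> S}"
    proof
      fix S assume "S \<in> insert i ` ?T"
      then obtain T where T: "T \<in> ?T" "S = insert i T" by auto
      then have "finite T" "i \<notin> T" using fin by auto
      then show "S \<in> {S \<in> ksets n k. i \<in> S}" using T assms by (auto simp: ksets_def)
    qed
    show "(\<lambda>S. S - {i}) ` {S \<in> ksets n k. i \<in> S} \<subseteq> ?T"
    proof
      fix T assume "T \<in> (\<lambda>S. S - {i}) ` {S \<in> ksets n k. i \<in> S}"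
      then obtain S where S: "S \<in> ksets n k" "i \<in> S" "T = S - {i}" by auto
      then have "finite S" by (auto simp: ksets_def intro: finite_subset)
      then show "T \<in> ?T" using S by (auto simp: ksets_def)
    qed
  qed
  then have "card {S \<in> ksets n k. i \<in> S} = card ?T" by (simp add: bij_betw_same_card)
  also have "\<dots> = card ({..<n} - {i}) choose (k - 1)" by (rule n_subsets) simp
  also have "\<dots> = (n - 1) choose (k - 1)" using assms by simp
  finally show ?thesis .
qed

lemma prob_i:
  assumes "i < n" "1 \<le> k" "k \<le> n"
  shows "measure_pmf.prob (pmf_of_set (ksets n k)) {S. i \<in> S} = real k / real n"
proof -
  have "measure_pmf.prob (pmf_of_set (ksets n k)) {S. i \<in> S} = card {S \<in> ksets n k. i \<in> S} / card (ksets n k)"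
    using ksets_finite ksets_ne[OF assms(3)] by (simp add: measure_pmf_of_set Int_def)
  also have "\<dots> = ((n - 1) choose (k - 1)) / (n choose k)"
    using card_ksets_i[OF assms(1,2)] card_ksets by simp
  also have "\<dots> = real k / real n"
  proof -
    have e: "k * (n choose k) = n * ((n - 1) choose (k - 1))"
      using times_binomial_minus1_eq assms by simp
    have "(n choose k) > 0" using assms by simp
    then show ?thesis using assms e
      by (simp add: field_simps) (metis of_nat_mult)
  qed
  finally show ?thesis .
qed

lemma prob_hit:
  assumes "Os \<subseteq> {..<n}" "1 \<le> k" "k \<le> n"
  shows "measure_pmf.prob (pmf_of_set (ksets n k)) {S. S \<inter> Os \<noteq> {}} \<le> real (card Os) * real k / real n"
proof -
  have fO: "finite Os" using assms(1) finite_subset by blast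
  have "{S. S \<inter> Os \<noteq> {}} = (\<Union>i\<in>Os. {S. i \<in> S})" by auto
  then have "measure_pmf.prob (pmf_of_set (ksets n k)) {S. S \<inter> Os \<noteq> {}}
     \<le> (\<Sum>i\<in>Os. measure_pmf.prob (pmf_of_set (ksets n k)) {S. i \<in> S})"
    using measure_pmf.finite_measure_subadditive_finite[OF fO] by simp
  also have "\<dots> = (\<Sum>i\<in>Os. real k / real n)"
    using prob_i assms by (intro sum.cong) auto
  also have "\<dots> = real (card Os) * real k / real n" by simp
  finally show ?thesis .
qed

lemma weight_flip:
  assumes "length x = n" "S \<subseteq> {..<n}"
  shows "weight (flip S x) = card (({i. i < n \<and> x!i} - S) \<union> (S - {i. i < n \<and> x!i}))"
proof -
  have "weight (flip S x) = card {i. i < n \<and> flip S x ! i}"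
    unfolding weight_def using assms by (simp add: length_filter_conv_card)
  also have "{i. i < n \<and> flip S x ! i} = ({i. i < n \<and> x!i} - S) \<union> (S - {i. i < n \<and> x!i})"
    using assms by auto
  finally show ?thesis .
qed

lemma weight_card: "length x = n \<Longrightarrow> weight x = card {i. i < n \<and> x!i}"
  unfolding weight_def by (simp add: length_filter_conv_card)



definition gfun :: "nat \<Rightarrow> nat \<Rightarrow> real list \<Rightarrow> nat" where
  "gfun n L vs = (case vs of [] \<Rightarrow> 0 | v0 # rest \<Rightarrow>
     if v0 \<noteq> 0 then nat \<lfloor>v0\<rfloor>
     else if Max (set rest) < real n / 2 then nat \<lfloor>Max (set rest)\<rfloor> - (2*L+1)
     else nat \<lfloor>Min (set rest - {0})\<rfloor> + (2*L+1))"

lemma jump_le: "jump n L y \<le> real (weight y)"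
  by (simp add: jump_def)

lemma jump_nz: "jump n L y \<noteq> 0 \<Longrightarrow> jump n L y = real (weight y)"
  by (auto simp: jump_def split: if_splits)

lemma jump_mid: "L < weight y \<Longrightarrow> weight y < n - L \<Longrightarrow> jump n L y = real (weight y)"
  by (auto simp: jump_def)

lemma weight_le: "weight x \<le> length x"
  by (simp add: weight_def)

lemma wf_facts:
  assumes "length x = n" "S \<in> ksets n k"
  shows "weight (flip S x) \<le> weight x + k"
    and "weight x - k \<le> weight (flip S x)"
    and "S \<inter> {i. i < n \<and> x!i} = {} \<Longrightarrow> weight (flip S x) = weight x + k"
    and "S \<inter> {i. i < n \<and> \<not> x!i} = {} \<Longrightarrow> weight (flip S x) = weight x - k"
proof -
  let ?O = "{i. i < n \<and> x!i}"
  have S: "S \<subseteq> {..<n}" "card S = k" using assms by (auto simp: ksets_def)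
  have fS: "finite S" using S finite_subset by blast
  have fO: "finite ?O" by simp
  have wx: "weight x = card ?O" using weight_card assms by simp
  have wf: "weight (flip S x) = card (?O - S) + card (S - ?O)"
    using weight_flip[OF assms(1) S(1)] fS fO by (subst card_Un_disjoint[symmetric]) auto
  show "weight (flip S x) \<le> weight x + k"
    using wf wx S card_mono[OF fO, of "?O - S"] card_mono[OF fS, of "S - ?O"] by auto
  show "weight x - k \<le> weight (flip S x)"
    using wf wx S diff_card_le_card_Diff[OF fS, of ?O] by auto
  show "S \<inter> ?O = {} \<Longrightarrow> weight (flip S x) = weight x + k"
    using wf wx S by (simp add: Diff_triv Int_commute)
  assume "S \<inter> {i. i < n \<and> \<not> x!i} = {}"
  then have "S \<subseteq> ?O" using S by auto
  then show "weight (flip S x) = weight x - k"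
    using wf wx S fS by (simp add: card_Diff_subset)
qed

lemma set_Dk: "k \<le> n \<Longrightarrow> y \<in> set_pmf (Dk n k x) \<Longrightarrow> \<exists>S\<in>ksets n k. y = flip S x"
  using ksets_finite ksets_ne by (auto simp: Dk_def)

lemma prob_bad:
  assumes "T \<subseteq> {..<n}" "card T \<le> L" "k = 2*L+1" "k \<le> n"
    and G: "\<And>S. S \<in> ksets n k \<Longrightarrow> S \<inter> T = {} \<Longrightarrow> G (flip S x)"
  shows "measure_pmf.prob (Dk n k x) {y. \<not> G y} \<le> 3 * real L ^ 2 / real n"
proof -
  let ?U = "pmf_of_set (ksets n k)"
  have "measure_pmf.prob (Dk n k x) {y. \<not> G y} = measure_pmf.prob ?U ((\<lambda>S. flip S x) -` {y. \<not> G y})"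
    by (simp add: Dk_def)
  also have "\<dots> = measure_pmf.prob ?U ((\<lambda>S. flip S x) -` {y. \<not> G y} \<inter> set_pmf ?U)"
    by (simp add: measure_Int_set_pmf)
  also have "\<dots> \<le> measure_pmf.prob ?U {S. S \<inter> T \<noteq> {}}"
    using G ksets_finite ksets_ne[OF assms(4)] by (intro measure_pmf.finite_measure_mono) auto
  also have "\<dots> \<le> real (card T) * real k / real n"
    using prob_hit[OF assms(1) _ assms(4)] assms(3) by simp
  also have "\<dots> \<le> 3 * real L ^ 2 / real n"
  proof (intro divide_right_mono)
    have "real (card T) * real k \<le> real L * real k" using assms(2) by (intro mult_right_mono) auto
    also have "\<dots> \<le> 3 * real L ^ 2" using assms(3) by (cases "L = 0") (auto simp: power2_eq_square algebra_simps)
    finally show "real (card T) * real k \<le> 3 * real L ^ 2" .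
  qed simp
  finally show ?thesis .
qed



lemma correct_case1:
  assumes "length x = n" "weight x \<le> L" "6*L+2 < n" "k = 2*L+1"
    and ys: "set ys \<subseteq> set_pmf (Dk n k x)" "ys \<noteq> []"
    and good: "\<exists>y\<in>set ys. weight y = weight x + k"
  shows "gfun n L (jump n L x # map (jump n L) ys) = weight x"
proof -
  let ?w = "weight x"
  have jx: "jump n L x = 0" using assms by (simp add: jump_def)
  have kn: "k \<le> n" using assms by simp
  have up: "v \<le> real (?w + k)" if v: "v \<in> set (map (jump n L) ys)" for v
  proof -
    obtain y where y: "y \<in> set ys" "v = jump n L y" using v by auto
    obtain S where "S \<in> ksets n k" "y = flip S x" using set_Dk[OF kn] y ys by blast
    then have "weight y \<le> ?w + k" using wf_facts(1) assms(1) by blast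
    then show ?thesis using jump_le[of n L y] y by simp
  qed
  obtain y where y: "y \<in> set ys" "weight y = ?w + k" using good by auto
  have "jump n L y = real (weight y)" using y assms by (intro jump_mid) auto
  then have "jump n L y = real (?w + k)" using y by simp
  then have mem: "real (?w + k) \<in> set (map (jump n L) ys)" using y by force
  have mx: "Max (set (map (jump n L) ys)) = real (?w + k)"
    using up mem by (intro Max_eqI) auto
  have lt: "real (?w + k) < real n / 2" using assms by simp
  define t where "t = ?w + k"
  have "Max (set (map (jump n L) ys)) = real t" "real t < real n / 2" using mx lt t_def by simp_all
  then have "gfun n L (jump n L x # map (jump n L) ys) = t - k"
    using jx assms(4) by (simp add: gfun_def del: set_map)
  then show ?thesis using t_def by simp
qed

lemma correct_case2:
  assumes "length x = n" "n - L \<le> weight x" "6*L+2 < n" "k = 2*L+1"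
    and ys: "set ys \<subseteq> set_pmf (Dk n k x)" "ys \<noteq> []"
    and good: "\<exists>y\<in>set ys. weight y = weight x - k"
  shows "gfun n L (jump n L x # map (jump n L) ys) = weight x"
proof (cases "weight x = n")
  case True
  then show ?thesis using assms by (simp add: gfun_def jump_def)
next
  case False
  let ?w = "weight x"
  have wn: "?w < n" using False weight_le[of x] assms(1) by simp
  have jx: "jump n L x = 0" using assms wn by (auto simp: jump_def)
  have kn: "k \<le> n" using assms by simp
  have kw: "k \<le> ?w" using assms by simp
  have lo: "real (?w - k) \<le> v" if v: "v \<in> set (map (jump n L) ys) - {0}" for v
  proof -
    obtain y where y: "y \<in> set ys" "v = jump n L y" "v \<noteq> 0" using v by auto
    obtain S where "S \<in> ksets n k" "y = flip S x" using set_Dk[OF kn] y ys by blast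
    then have "?w - k \<le> weight y" using wf_facts(2) assms(1) by blast
    then show ?thesis using jump_nz[of n L y] y by simp
  qed
  obtain y where y: "y \<in> set ys" "weight y = ?w - k" using good by auto
  have "jump n L y = real (weight y)" using y assms wn kw by (intro jump_mid) auto
  then have "jump n L y = real (?w - k)" using y by simp
  moreover have "real (?w - k) \<noteq> 0" using assms kw by simp
  ultimately have mem: "real (?w - k) \<in> set (map (jump n L) ys) - {0}" using y by force
  have mn: "Min (set (map (jump n L) ys) - {0}) = real (?w - k)"
    using lo mem by (intro Min_eqI) auto
  have "Max (set (map (jump n L) ys)) \<ge> real (?w - k)"
    using mem by (intro Max_ge_iff[THEN iffD2]) auto
  moreover have "real (?w - k) \<ge> real n / 2" using assms kw by simp
  ultimately have ge: "\<not> Max (set (map (jump n L) ys)) < real n / 2" by simp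
  define t where "t = ?w - k"
  have "Min (set (map (jump n L) ys) - {0}) = real t" using mn t_def by simp
  then have "gfun n L (jump n L x # map (jump n L) ys) = t + k"
    using jx ge assms(4) by (simp add: gfun_def del: set_map)
  then show ?thesis using t_def kw by simp
qed



lemma main_prob:
  assumes "6*L+2 < n" "1 \<le> m" "x \<in> cube n"
  shows "pmf (run n L m (\<lambda>i. Dk n (2*L+1)) (gfun n L) x) (weight x) \<ge> 1 - (3 * real L ^ 2 / real n) ^ m"
proof -
  define k where "k = 2*L+1"
  define Q where "Q = Dk n k x"
  define M where "M = samples (\<lambda>_. Q) m"
  define h where "h = (\<lambda>ys. gfun n L (jump n L x # map (jump n L) ys))"
  define p where "p = 3 * real L ^ 2 / real n"
  have p0: "0 \<le> p" by (simp add: p_def)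
  have lx: "length x = n" using assms by (simp add: cube_def)
  have kn: "k \<le> n" using assms k_def by simp
  have run: "run n L m (\<lambda>i. Dk n (2*L+1)) (gfun n L) x = map_pmf h M"
    by (simp add: run_def h_def M_def Q_def k_def)
  have key: "measure_pmf.prob M (h -` {weight x}) \<ge> 1 - p ^ m"
    if G: "\<And>S. S \<in> ksets n k \<Longrightarrow> S \<inter> T = {} \<Longrightarrow> G (flip S x)"
      and T: "T \<subseteq> {..<n}" "card T \<le> L"
      and corr: "\<And>ys. set ys \<subseteq> set_pmf Q \<Longrightarrow> ys \<noteq> [] \<Longrightarrow> \<exists>y\<in>set ys. G y \<Longrightarrow> h ys = weight x"
    for G T
  proof -
    have b: "measure_pmf.prob Q {y. \<not> G y} \<le> p"
      unfolding Q_def p_def using prob_bad[OF T k_def kn] G by blast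
    have ab: "measure_pmf.prob M {ys. \<forall>y\<in>set ys. \<not> G y} \<le> p ^ m"
      unfolding M_def by (rule samples_allbad[OF b])
    have "UNIV - {ys. \<forall>y\<in>set ys. \<not> G y} = {ys. \<exists>y\<in>set ys. G y}" by auto
    then have eq1: "measure_pmf.prob M {ys. \<exists>y\<in>set ys. G y} = 1 - measure_pmf.prob M {ys. \<forall>y\<in>set ys. \<not> G y}"
      using measure_pmf.prob_compl[of "{ys. \<forall>y\<in>set ys. \<not> G y}" M] by simp
    also have "\<dots> = measure_pmf.prob M ({ys. \<exists>y\<in>set ys. G y} \<inter> set_pmf M)"
      using calculation by (simp add: measure_Int_set_pmf)
    also have "\<dots> \<le> measure_pmf.prob M (h -` {weight x})"
    proof (rule measure_pmf.finite_measure_mono)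
      show "{ys. \<exists>y\<in>set ys. G y} \<inter> set_pmf M \<subseteq> h -` {weight x}"
      proof
        fix ys assume ys: "ys \<in> {ys. \<exists>y\<in>set ys. G y} \<inter> set_pmf M"
        then have "length ys = m" "set ys \<subseteq> set_pmf Q" using samples_set M_def by blast+
        moreover have "ys \<noteq> []" using calculation(1) assms(2) by auto
        moreover have "\<exists>y\<in>set ys. G y" using ys by auto
        ultimately show "ys \<in> h -` {weight x}" using corr by auto
      qed
    qed simp
    finally show ?thesis using ab eq1 by linarith
  qed
  show ?thesis
  proof (cases "jump n L x = 0")
    case False
    then have "jump n L x = real (weight x)" by (rule jump_nz)
    then have "h ys = weight x" for ys using False by (simp add: h_def gfun_def)
    then have "h -` {weight x} = UNIV" by auto
    then have "measure_pmf.prob M (h -` {weight x}) = 1" by simp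
    moreover have "p ^ m \<ge> 0" using p0 by simp
    ultimately show ?thesis using run by (simp add: pmf_map p_def)
  next
    case True
    have wle: "weight x \<le> n" using weight_le[of x] lx by simp
    show ?thesis
    proof (cases "weight x \<le> L")
      case True
      have "measure_pmf.prob M (h -` {weight x}) \<ge> 1 - p ^ m"
      proof (rule key[of "{i. i < n \<and> x!i}" "\<lambda>y. weight y = weight x + k"])
        show "{i. i < n \<and> x!i} \<subseteq> {..<n}" by auto
        show "card {i. i < n \<and> x!i} \<le> L" using True weight_card[OF lx] by simp
        show "weight (flip S x) = weight x + k" if "S \<in> ksets n k" "S \<inter> {i. i < n \<and> x!i} = {}" for S
          using wf_facts(3)[OF lx that(1)] that(2) by simp
        show "h ys = weight x" if "set ys \<subseteq> set_pmf Q" "ys \<noteq> []" "\<exists>y\<in>set ys. weight y = weight x + k" for ys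
          unfolding h_def using correct_case1[OF lx True assms(1) k_def] that Q_def by simp
      qed
      then show ?thesis using run by (simp add: pmf_map p_def)
    next
      case False
      then have wb: "n - L \<le> weight x" using \<open>jump n L x = 0\<close> wle by (auto simp: jump_def split: if_splits)
      have "measure_pmf.prob M (h -` {weight x}) \<ge> 1 - p ^ m"
      proof (rule key[of "{i. i < n \<and> \<not> x!i}" "\<lambda>y. weight y = weight x - k"])
        show "{i. i < n \<and> \<not> x!i} \<subseteq> {..<n}" by auto
        have "{i. i < n \<and> \<not> x!i} = {..<n} - {i. i < n \<and> x!i}" by auto
        then have "card {i. i < n \<and> \<not> x!i} = n - weight x"
          using weight_card[OF lx] card_Diff_subset[of "{i. i < n \<and> x!i}" "{..<n}"] by auto
        then show "card {i. i < n \<and> \<not> x!i} \<le> L" using wb by simp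
        show "weight (flip S x) = weight x - k" if "S \<in> ksets n k" "S \<inter> {i. i < n \<and> \<not> x!i} = {}" for S
          using wf_facts(4)[OF lx that(1)] that(2) by simp
        show "h ys = weight x" if "set ys \<subseteq> set_pmf Q" "ys \<noteq> []" "\<exists>y\<in>set ys. weight y = weight x - k" for ys
          unfolding h_def using correct_case2[OF lx wb assms(1) k_def] that Q_def by simp
      qed
      then show ?thesis using run by (simp add: pmf_map p_def)
    qed
  qed
qed



lemma arith_part:
  fixes \<epsilon> c C0 :: real and L n m :: nat
  assumes e: "\<epsilon> > 0" and c: "c > 0" and m: "m = nat \<lceil>c / (2*\<epsilon>)\<rceil> + 1"
    and n: "real n \<ge> (6*\<bar>C0\<bar>+3)^2" "n \<ge> 1"
    and hL: "real L \<le> C0 * real n powr (1/2 - \<epsilon>)"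
  shows "6*L+2 < n" and "(3 * real L ^ 2 / real n) ^ m \<le> (3*C0^2)^m * real n powr (-c)"
proof -
  let ?a = "1/2 - \<epsilon>"
  have n1: "real n \<ge> 1" using n by simp
  have pa: "real n powr ?a \<le> sqrt (real n)"
    using powr_mono[of ?a "1/2" "real n"] e n1 by (simp add: powr_half_sqrt)
  have pa0: "real n powr ?a \<ge> 0" by simp
  have L1: "real L \<le> \<bar>C0\<bar> * sqrt (real n)"
  proof -
    have "C0 * real n powr ?a \<le> \<bar>C0\<bar> * real n powr ?a" using pa0 by (intro mult_right_mono) auto
    also have "\<dots> \<le> \<bar>C0\<bar> * sqrt (real n)" using pa by (intro mult_left_mono) auto
    finally show ?thesis using hL by linarith
  qed
  have s: "sqrt (real n) \<ge> 6*\<bar>C0\<bar>+3" using n(1) real_le_rsqrt by simp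
  have "real n = sqrt (real n) * sqrt (real n)" by simp
  also have "\<dots> \<ge> (6*\<bar>C0\<bar>+3) * sqrt (real n)" using s by (intro mult_right_mono) auto
  finally have "real n \<ge> 6 * (\<bar>C0\<bar> * sqrt (real n)) + 3 * sqrt (real n)" by (simp add: algebra_simps)
  then show "6*L+2 < n" using L1 s by simp
  have L2: "real L ^ 2 \<le> C0^2 * real n powr (2*?a)"
  proof -
    have "real L ^ 2 \<le> (C0 * real n powr ?a)^2" using hL by (intro power_mono) auto
    also have "\<dots> = C0^2 * real n powr (2*?a)"
    proof -
      have "(real n powr ?a)^2 = real n powr (2*?a)" using n1 powr_power[of "real n" ?a 2] by simp
      then show ?thesis by (simp add: power_mult_distrib)
    qed
    finally show ?thesis .
  qed
  have q: "3 * real L ^ 2 / real n \<le> 3*C0^2 * real n powr (-2*\<epsilon>)"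
  proof -
    have "3 * real L ^ 2 / real n \<le> 3 * (C0^2 * real n powr (2*?a)) / real n"
      using L2 n1 by (intro divide_right_mono) auto
    also have "\<dots> = 3*C0^2 * (real n powr (2*?a) / real n powr 1)" using n1 by simp
    also have "real n powr (2*?a) / real n powr 1 = real n powr (-2*\<epsilon>)"
      using powr_diff[of "real n" "2*?a" 1] by (simp add: algebra_simps)
    finally show ?thesis by simp
  qed
  have "(3 * real L ^ 2 / real n) ^ m \<le> (3*C0^2 * real n powr (-2*\<epsilon>)) ^ m"
    using q by (intro power_mono) auto
  also have "\<dots> = (3*C0^2)^m * real n powr (real m * (-2*\<epsilon>))"
    using n1 by (simp add: power_mult_distrib powr_power)
  also have "\<dots> \<le> (3*C0^2)^m * real n powr (-c)"
  proof (intro mult_left_mono powr_mono)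
    have "real m \<ge> c / (2*\<epsilon>)" using m by linarith
    then have "real m * (2*\<epsilon>) \<ge> c" using e by (simp add: field_simps)
    then show "real m * (-2*\<epsilon>) \<le> -c" by simp
  qed (use n1 in auto)
  finally show "(3 * real L ^ 2 / real n) ^ m \<le> (3*C0^2)^m * real n powr (-c)" .
qed



theorem lemma3:
  fixes \<epsilon> c :: real
  assumes "\<epsilon> > 0" and "c > 0"
  shows "\<exists>m::nat. \<forall>(C0::real) (l::nat \<Rightarrow> nat).
           (\<forall>n\<ge>1. real (l n) \<le> C0 * real n powr (1/2 - \<epsilon>)) \<longrightarrow>
           (\<exists>K::real. \<exists>N::nat. \<forall>n\<ge>N.
              \<exists>(D::nat \<Rightarrow> bool list \<Rightarrow> bool list pmf) (g::real list \<Rightarrow> nat).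
                (\<forall>i<m. unary_unbiased n (D i)) \<and>
                (\<forall>x\<in>cube n. pmf (run n (l n) m D g x) (weight x) \<ge> 1 - K * real n powr (- c)))"
proof -
  define m where "m = nat \<lceil>c / (2*\<epsilon>)\<rceil> + 1"
  show ?thesis
  proof (intro exI[of _ m] allI impI)
  fix C0 :: real and l :: "nat \<Rightarrow> nat"
  assume hl: "\<forall>n\<ge>1. real (l n) \<le> C0 * real n powr (1/2 - \<epsilon>)"
  show "\<exists>K N. \<forall>n\<ge>N. \<exists>D g. (\<forall>i<m. unary_unbiased n (D i)) \<and>
           (\<forall>x\<in>cube n. pmf (run n (l n) m D g x) (weight x) \<ge> 1 - K * real n powr (- c))"
  proof (intro exI[of _ "(3*C0^2)^m"] exI[of _ "nat \<lceil>(6*\<bar>C0\<bar>+3)^2\<rceil> + 1"] allI impI)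
    fix n assume nN: "n \<ge> nat \<lceil>(6*\<bar>C0\<bar>+3)^2\<rceil> + 1"
    have n: "real n \<ge> (6*\<bar>C0\<bar>+3)^2" "n \<ge> 1" using nN by linarith+
    note A = arith_part[OF assms m_def n hl[rule_format, OF n(2)]]
    show "\<exists>D g. (\<forall>i<m. unary_unbiased n (D i)) \<and>
           (\<forall>x\<in>cube n. pmf (run n (l n) m D g x) (weight x) \<ge> 1 - (3*C0^2)^m * real n powr (- c))"
    proof (intro exI[of _ "\<lambda>i. Dk n (2 * l n + 1)"] exI[of _ "gfun n (l n)"] conjI allI impI ballI)
      fix i show "unary_unbiased n (Dk n (2 * l n + 1))" using A(1) by (intro Dk_unbiased) simp
    next
      fix x assume "x \<in> cube n"
      have "1 \<le> m" by (simp add: m_def)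
      then show "pmf (run n (l n) m (\<lambda>i. Dk n (2 * l n + 1)) (gfun n (l n)) x) (weight x)
          \<ge> 1 - (3*C0^2)^m * real n powr (- c)"
        using main_prob[OF A(1) _ \<open>x \<in> cube n\<close>] A(2) by (meson diff_left_mono order_trans)
    qed
  qed
  qed
qed


end
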